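(* Let $\{e_i\}_{i=1}^\infty$ be the canonical orthonormal basis of the real Hilbert space $\ell_2$, let $a_i\neq0$ be real numbers with $\sum_i a_i^2<\infty$, let $x_k=a_k(e_1+e_{k+1})$, let $L$ be the right shift $L(c_1,c_2,\dots)=(0,c_1,c_2,\dots)$, and let $\mathcal{X}=\{e_i\}_{i=1}^\infty\cup\{2^{-i}L^ix_k\}_{i=0,k=1}^{\infty,\infty}$ (an injective frame for $\ell_2$). Then for every $\epsilon>0$ there is a frame $\mathcal{Y}$ for $\ell_2$ (indexed by the same index set) such that $d(\mathcal{X},\mathcal{Y})<\epsilon$ and $\mathcal{Y}$ is not injective.
   Context: A family $\{y_k\}$ in $\ell_2$ is called injective if whenever a Hilbert–Schmidt self-adjoint operator $T$ on $\ell_2$ satisfies $\langle Ty_k,y_k\rangle=0$ for all $k$, then $T=0$. For frames $\mathcal{X}=\{x_k\}$ and $\mathcal{Y}=\{y_k\}$ indexed by the same set, $d^2(\mathcal{X},\mathcal{Y})=\sum_k\|x_k-y_k\|^2$ (possibly infinite). *)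

theory Defs
  imports "HOL-Analysis.Analysis"
begin

text \<open>The real Hilbert space l2, realised concretely as square-summable real sequences
  indexed by nat (index 0 corresponds to the paper's index 1).\<close>

definition l2 :: "(nat \<Rightarrow> real) set" where
  "l2 = {x. summable (\<lambda>n. (x n)\<^sup>2)}"

definition l2_inner :: "(nat \<Rightarrow> real) \<Rightarrow> (nat \<Rightarrow> real) \<Rightarrow> real" where
  "l2_inner x y = (\<Sum>n. x n * y n)"

definition l2_norm :: "(nat \<Rightarrow> real) \<Rightarrow> real" where
  "l2_norm x = sqrt (\<Sum>n. (x n)\<^sup>2)"

definition l2_basis :: "nat \<Rightarrow> nat \<Rightarrow> real" where
  "l2_basis i = (\<lambda>n. if n = i then 1 else 0)"

definition right_shift :: "(nat \<Rightarrow> real) \<Rightarrow> (nat \<Rightarrow> real)" where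
  "right_shift c = (\<lambda>n. case n of 0 \<Rightarrow> 0 | Suc m \<Rightarrow> c m)"

text \<open>A bounded linear operator on l2 (only its behaviour on l2 matters).\<close>
definition bounded_op_l2 :: "((nat \<Rightarrow> real) \<Rightarrow> (nat \<Rightarrow> real)) \<Rightarrow> bool" where
  "bounded_op_l2 T \<longleftrightarrow>
     (\<forall>x\<in>l2. T x \<in> l2) \<and>
     (\<forall>x\<in>l2. \<forall>y\<in>l2. T (\<lambda>n. x n + y n) = (\<lambda>n. T x n + T y n)) \<and>
     (\<forall>x\<in>l2. \<forall>c::real. T (\<lambda>n. c * x n) = (\<lambda>n. c * T x n)) \<and>
     (\<exists>C. \<forall>x\<in>l2. l2_norm (T x) \<le> C * l2_norm x)"

definition self_adjoint_l2 :: "((nat \<Rightarrow> real) \<Rightarrow> (nat \<Rightarrow> real)) \<Rightarrow> bool" where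
  "self_adjoint_l2 T \<longleftrightarrow> (\<forall>x\<in>l2. \<forall>y\<in>l2. l2_inner (T x) y = l2_inner x (T y))"

definition hilbert_schmidt_l2 :: "((nat \<Rightarrow> real) \<Rightarrow> (nat \<Rightarrow> real)) \<Rightarrow> bool" where
  "hilbert_schmidt_l2 T \<longleftrightarrow> bounded_op_l2 T \<and> summable (\<lambda>i. (l2_norm (T (l2_basis i)))\<^sup>2)"

definition injective_family :: "('i \<Rightarrow> (nat \<Rightarrow> real)) \<Rightarrow> bool" where
  "injective_family y \<longleftrightarrow>
     (\<forall>T. hilbert_schmidt_l2 T \<and> self_adjoint_l2 T \<and> (\<forall>k. l2_inner (T (y k)) (y k) = 0)
          \<longrightarrow> (\<forall>x\<in>l2. T x = (\<lambda>n. 0)))"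

definition frame_l2 :: "('i \<Rightarrow> (nat \<Rightarrow> real)) \<Rightarrow> bool" where
  "frame_l2 y \<longleftrightarrow> (\<forall>k. y k \<in> l2) \<and>
     (\<exists>A B. 0 < A \<and> 0 < B \<and>
        (\<forall>f\<in>l2. (\<lambda>k. (l2_inner f (y k))\<^sup>2) summable_on UNIV \<and>
                 A * (l2_norm f)\<^sup>2 \<le> (\<Sum>\<^sub>\<infinity>k. (l2_inner f (y k))\<^sup>2) \<and>
                 (\<Sum>\<^sub>\<infinity>k. (l2_inner f (y k))\<^sup>2) \<le> B * (l2_norm f)\<^sup>2))"

text \<open>d(X,Y) < eps, where d^2(X,Y) = sum_k ||x_k - y_k||^2 (possibly infinite):
  the sum must be finite and below eps^2.\<close>
definition frame_dist_less :: "('i \<Rightarrow> (nat \<Rightarrow> real)) \<Rightarrow> ('i \<Rightarrow> (nat \<Rightarrow> real)) \<Rightarrow> real \<Rightarrow> bool" where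
  "frame_dist_less X Y eps \<longleftrightarrow>
     (\<lambda>k. (l2_norm (\<lambda>n. X k n - Y k n))\<^sup>2) summable_on UNIV \<and>
     sqrt (\<Sum>\<^sub>\<infinity>k. (l2_norm (\<lambda>n. X k n - Y k n))\<^sup>2) < eps"

text \<open>The frame X of the theorem, indexed by nat + nat * nat:
  Inl i  ~ e_{i+1};  Inr (i,k) ~ 2^{-i} L^i x_{k+1}, with x_{k+1} = a_{k+1}(e_1 + e_{k+2}).\<close>
definition xvec :: "(nat \<Rightarrow> real) \<Rightarrow> nat \<Rightarrow> (nat \<Rightarrow> real)" where
  "xvec a k = (\<lambda>n. a k * (l2_basis 0 n + l2_basis (Suc k) n))"

definition frameX :: "(nat \<Rightarrow> real) \<Rightarrow> nat + nat \<times> nat \<Rightarrow> (nat \<Rightarrow> real)" where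
  "frameX a j = (case j of
       Inl i \<Rightarrow> l2_basis i
     | Inr (i, k) \<Rightarrow> (\<lambda>n. (1/2) ^ i * (right_shift ^^ i) (xvec a k) n))"

end

theory Submission
  imports Defs
begin

lemma rs_pow: "(right_shift ^^ i) v n = (if i \<le> n then v (n - i) else 0)"
proof (induction i arbitrary: n)
  case 0 then show ?case by simp
next
  case (Suc i) then show ?case
    by (cases n) (auto simp: right_shift_def)
qed

definition tp :: "real \<Rightarrow> nat \<Rightarrow> nat \<Rightarrow> nat \<Rightarrow> real" where
  "tp c p q = (\<lambda>n. c * ((if n = p then 1 else 0) + (if n = q then 1 else 0)))"

lemma X_Inr: "frameX a (Inr (i,k)) = tp ((1/2)^i * a k) i (Suc (i+k))"
  by (auto simp: frameX_def tp_def rs_pow xvec_def l2_basis_def fun_eq_iff)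

lemma X_Inl: "frameX a (Inl i) = l2_basis i"
  by (simp add: frameX_def)

lemma inner_tp: "l2_inner f (tp c p q) = c * (f p + f q)" if "p \<noteq> q"
proof -
  have "l2_inner f (tp c p q) = (\<Sum>n\<in>{p,q}. f n * tp c p q n)"
    unfolding l2_inner_def by (rule suminf_finite) (auto simp: tp_def)
  then show ?thesis using that by (simp add: tp_def algebra_simps)
qed

lemma inner_basis: "l2_inner f (l2_basis i) = f i"
proof -
  have "l2_inner f (l2_basis i) = (\<Sum>n\<in>{i}. f n * l2_basis i n)"
    unfolding l2_inner_def by (rule suminf_finite) (auto simp: l2_basis_def)
  then show ?thesis by (simp add: l2_basis_def)
qed

lemma tp_l2: "tp c p q \<in> l2"
  unfolding l2_def mem_Collect_eq by (rule summable_finite[of "{p,q}"]) (simp_all add: tp_def)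

lemma basis_l2: "l2_basis i \<in> l2"
  unfolding l2_def mem_Collect_eq by (rule summable_finite[of "{i}"]) (simp_all add: l2_basis_def)

lemma coord_le: "f \<in> l2 \<Longrightarrow> (f p)\<^sup>2 \<le> (\<Sum>n. (f n)\<^sup>2)"
  using sum_le_suminf[of "\<lambda>n. (f n)\<^sup>2" "{p}"] by (auto simp: l2_def)

lemma Q_nonneg: "f \<in> l2 \<Longrightarrow> 0 \<le> (\<Sum>n. (f n)\<^sup>2)"
  by (intro suminf_nonneg) (auto simp: l2_def)

lemma norm_sq: "f \<in> l2 \<Longrightarrow> (l2_norm f)\<^sup>2 = (\<Sum>n. (f n)\<^sup>2)"
  unfolding l2_norm_def
  using Q_nonneg by auto

lemma tp_bound: "f \<in> l2 \<Longrightarrow> (l2_inner f (tp c p q))\<^sup>2 \<le> 4 * c\<^sup>2 * (\<Sum>n. (f n)\<^sup>2)" if "p \<noteq> q"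
proof -
  assume f: "f \<in> l2"
  have "(l2_inner f (tp c p q))\<^sup>2 = c\<^sup>2 * (f p + f q)\<^sup>2" using that by (simp add: inner_tp power_mult_distrib)
  also have "(f p + f q)\<^sup>2 \<le> 2 * ((f p)\<^sup>2 + (f q)\<^sup>2)"
  proof -
    have "0 \<le> (f p - f q)\<^sup>2" by simp
    moreover have "(f p + f q)\<^sup>2 + (f p - f q)\<^sup>2 = 2 * ((f p)\<^sup>2 + (f q)\<^sup>2)"
      by (simp add: power2_eq_square algebra_simps)
    ultimately show ?thesis by linarith
  qed
  also have "\<dots> \<le> 4 * (\<Sum>n. (f n)\<^sup>2)" using coord_le[OF f, of p] coord_le[OF f, of q] by simp
  finally show ?thesis by (simp add: mult_left_mono)
qed

lemma sumh_bound:
  fixes f a :: "nat \<Rightarrow> real" and Q S :: real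
  assumes f: "f \<in> l2" and Qd: "Q = (\<Sum>n. (f n)\<^sup>2)" and Sd: "S = (\<Sum>n. (a n)\<^sup>2)"
    and sa: "summable (\<lambda>n. (a n)\<^sup>2)" and F: "finite F"
  shows "sum (\<lambda>j. case j of Inl i \<Rightarrow> (f i)\<^sup>2 | Inr p \<Rightarrow> 4 * Q * ((1/4)^(fst p) * (a (snd p))\<^sup>2)) F
     \<le> Q + 4 * Q * ((4/3) * S)"
proof -
  define h where "h = (\<lambda>j. case j of Inl i \<Rightarrow> (f i)\<^sup>2 | Inr p \<Rightarrow> 4 * Q * ((1/4)^(fst p) * (a (snd p))\<^sup>2))"
  define L where "L = Inl -` F"
  define P where "P = Inr -` F"
  have Q0: "Q \<ge> 0" using Qd Q_nonneg[OF f] by simp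
  have fL: "finite L" unfolding L_def using F by (auto intro: finite_vimageI)
  have fP: "finite P" unfolding P_def using F by (auto intro: finite_vimageI)
  have Feq: "F = Inl ` L \<union> Inr ` P"
    unfolding L_def P_def by (auto, case_tac x, auto)
  have "sum h F = sum h (Inl ` L) + sum h (Inr ` P)"
    unfolding Feq using fL fP by (intro sum.union_disjoint) auto
  also have "sum h (Inl ` L) = sum (\<lambda>i. (f i)\<^sup>2) L"
    by (subst sum.reindex) (auto simp: h_def)
  also have "sum h (Inr ` P) = sum (\<lambda>p. 4 * Q * ((1/4)^(fst p) * (a (snd p))\<^sup>2)) P"
    by (subst sum.reindex) (auto simp: h_def)
  also have "sum (\<lambda>i. (f i)\<^sup>2) L \<le> Q"
    unfolding Qd using f fL by (intro sum_le_suminf) (auto simp: l2_def)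
  also have "sum (\<lambda>p. 4 * Q * ((1/4)^(fst p) * (a (snd p))\<^sup>2)) P
      = 4 * Q * sum (\<lambda>p. (1/4)^(fst p) * (a (snd p))\<^sup>2) P"
    by (simp add: sum_distrib_left)
  also have "sum (\<lambda>p. (1/4::real)^(fst p) * (a (snd p))\<^sup>2) P
     \<le> sum (\<lambda>p. (1/4)^(fst p) * (a (snd p))\<^sup>2) (fst ` P \<times> snd ` P)"
    using fP by (intro sum_mono2) (auto simp: rev_image_eqI)
  also have "\<dots> = (\<Sum>i\<in>fst ` P. (1/4::real)^i) * (\<Sum>k\<in>snd ` P. (a k)\<^sup>2)"
    by (simp add: sum_product sum.cartesian_product split_def)
  also have "\<dots> \<le> (4/3) * S"
  proof (rule mult_mono)
    have "(\<Sum>i\<in>fst ` P. (1/4::real)^i) < 1 / (1 - 1/4)"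
      using fP by (intro geometric_sum_less) auto
    then show "(\<Sum>i\<in>fst ` P. (1/4::real)^i) \<le> 4/3" by simp
    show "(\<Sum>k\<in>snd ` P. (a k)\<^sup>2) \<le> S"
      unfolding Sd using fP sa by (intro sum_le_suminf) auto
  qed (auto simp: Sd intro!: suminf_nonneg sa sum_nonneg)
  finally show ?thesis unfolding h_def using Q0 by (simp add: mult_left_mono)
qed

lemma half_sq: "((1/2::real)^i)\<^sup>2 = (1/4)^i"
  by (simp add: power2_eq_square flip: power_mult_distrib)

lemma frame_Y:
  fixes a :: "nat \<Rightarrow> real" and Y :: "nat + nat \<times> nat \<Rightarrow> (nat \<Rightarrow> real)"
  assumes sa: "summable (\<lambda>n. (a n)\<^sup>2)"
    and YL: "\<And>i. Y (Inl i) = l2_basis i"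
    and YR: "\<And>i k. Y (Inr (i,k)) = frameX a (Inr (i,k)) \<or> Y (Inr (i,k)) = (\<lambda>n. 0)"
  shows "frame_l2 Y"
proof -
  define S where "S = (\<Sum>n. (a n)\<^sup>2)"
  have S0: "S \<ge> 0" unfolding S_def by (intro suminf_nonneg sa) auto
  have inl2: "Y j \<in> l2" for j
  proof (cases j)
    case (Inl i) then show ?thesis using YL basis_l2 by simp
  next
    case (Inr p) then obtain i k where p: "j = Inr (i,k)" by (cases p) auto
    have "(\<lambda>n::nat. 0::real) \<in> l2" by (simp add: l2_def)
    then show ?thesis using YR[of i k] tp_l2 unfolding p X_Inr by metis
  qed
  have main: "(\<lambda>k. (l2_inner f (Y k))\<^sup>2) summable_on UNIV \<and>
                 1 * (l2_norm f)\<^sup>2 \<le> (\<Sum>\<^sub>\<infinity>k. (l2_inner f (Y k))\<^sup>2) \<and>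
                 (\<Sum>\<^sub>\<infinity>k. (l2_inner f (Y k))\<^sup>2) \<le> (1 + 16/3 * S) * (l2_norm f)\<^sup>2"
    if f: "f \<in> l2" for f
  proof -
    define Q where "Q = (\<Sum>n. (f n)\<^sup>2)"
    have Q0: "Q \<ge> 0" using Q_def Q_nonneg[OF f] by simp
    define g where "g = (\<lambda>k. (l2_inner f (Y k))\<^sup>2)"
    define h where "h = (\<lambda>j. case j of Inl i \<Rightarrow> (f i)\<^sup>2 | Inr p \<Rightarrow> 4 * Q * ((1/4)^(fst p) * (a (snd p))\<^sup>2))"
    have gh: "g j \<le> h j" for j
    proof (cases j)
      case (Inl i) then show ?thesis by (simp add: g_def h_def YL inner_basis)
    next
      case (Inr p) then obtain i k where p: "j = Inr (i,k)" by (cases p) auto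
      show ?thesis
      proof (cases "Y (Inr (i,k)) = (\<lambda>n. 0)")
        case True then show ?thesis using Q0 by (simp add: p g_def h_def l2_inner_def)
      next
        case False
        then have "Y (Inr (i,k)) = tp ((1/2)^i * a k) i (Suc (i+k))" using YR[of i k] X_Inr by auto
        then have "g j \<le> 4 * ((1/2)^i * a k)\<^sup>2 * Q" unfolding g_def p Q_def
          using tp_bound[OF _ f] by simp
        also have "\<dots> = h j" by (simp add: h_def p power_mult_distrib half_sq)
        finally show ?thesis .
      qed
    qed
    have g0: "g j \<ge> 0" for j unfolding g_def by simp
    have fs: "sum g F \<le> Q + 4 * Q * ((4/3) * S)" if "finite F" for F
    proof -
      have "sum g F \<le> sum h F" by (intro sum_mono gh)
      also have "\<dots> \<le> Q + 4 * Q * ((4/3) * S)" unfolding h_def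
        by (rule sumh_bound[OF f Q_def S_def sa that])
      finally show ?thesis .
    qed
    have sg: "g summable_on UNIV"
      by (rule nonneg_bdd_above_summable_on) (use g0 fs in \<open>auto simp: bdd_above_def\<close>)
    have up: "infsum g UNIV \<le> Q + 4 * Q * ((4/3) * S)"
      using sg fs by (intro infsum_le_finite_sums) auto
    have low: "Q \<le> infsum g UNIV"
      unfolding Q_def
    proof (rule suminf_le_const)
      show "summable (\<lambda>n. (f n)\<^sup>2)" using f by (simp add: l2_def)
      fix M
      have "sum (\<lambda>n. (f n)\<^sup>2) {..<M} = sum g (Inl ` {..<M})"
        by (subst sum.reindex) (auto simp: g_def YL inner_basis)
      also have "\<dots> = infsum g (Inl ` {..<M})" by simp
      also have "\<dots> \<le> infsum g UNIV"
        using sg g0 by (intro infsum_mono_neutral) auto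
      finally show "sum (\<lambda>n. (f n)\<^sup>2) {..<M} \<le> infsum g UNIV" .
    qed
    have nq: "(l2_norm f)\<^sup>2 = Q" by (simp add: norm_sq[OF f] Q_def)
    show ?thesis using sg up low unfolding nq g_def[symmetric]
      by (simp add: algebra_simps)
  qed
  show ?thesis unfolding frame_l2_def
    apply (intro conjI allI inl2)
    apply (rule exI[of _ 1], rule exI[of _ "1 + 16/3 * S"])
    using main S0 by (auto simp: add_pos_nonneg)
qed

definition Tsw :: "nat \<Rightarrow> (nat \<Rightarrow> real) \<Rightarrow> (nat \<Rightarrow> real)" where
  "Tsw N x = (\<lambda>n. if n = N then x (Suc N) else if n = Suc N then x N else 0)"

lemma inner_Tsw: "l2_inner (Tsw N x) y = x (Suc N) * y N + x N * y (Suc N)"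
proof -
  have "l2_inner (Tsw N x) y = (\<Sum>n\<in>{N, Suc N}. Tsw N x n * y n)"
    unfolding l2_inner_def by (rule suminf_finite) (auto simp: Tsw_def)
  then show ?thesis by (simp add: Tsw_def)
qed

lemma inner_Tsw2: "l2_inner x (Tsw N y) = x N * y (Suc N) + x (Suc N) * y N"
proof -
  have "l2_inner x (Tsw N y) = (\<Sum>n\<in>{N, Suc N}. x n * Tsw N y n)"
    unfolding l2_inner_def by (rule suminf_finite) (auto simp: Tsw_def)
  then show ?thesis by (simp add: Tsw_def)
qed

lemma tp_prod: "(i,m) \<noteq> (N,0) \<Longrightarrow> tp c i (Suc(i+m)) N * tp c i (Suc(i+m)) (Suc N) = 0"
  by (cases "N = i") (auto simp: tp_def)

lemma sq_Tsw: "(\<Sum>n. (Tsw N x n)\<^sup>2) = (x (Suc N))\<^sup>2 + (x N)\<^sup>2"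
proof -
  have "(\<Sum>n. (Tsw N x n)\<^sup>2) = (\<Sum>n\<in>{N, Suc N}. (Tsw N x n)\<^sup>2)"
    by (rule suminf_finite) (auto simp: Tsw_def)
  then show ?thesis by (simp add: Tsw_def)
qed

lemma Tsw_l2: "Tsw N x \<in> l2"
  unfolding l2_def mem_Collect_eq by (rule summable_finite[of "{N, Suc N}"]) (auto simp: Tsw_def)

lemma Tsw_HS: "hilbert_schmidt_l2 (Tsw N)"
  unfolding hilbert_schmidt_l2_def bounded_op_l2_def
proof (intro conjI ballI allI)
  show "\<exists>C. \<forall>x\<in>l2. l2_norm (Tsw N x) \<le> C * l2_norm x"
  proof (intro exI[of _ 1] ballI)
    fix x assume x: "x \<in> l2"
    have "(\<Sum>n\<in>{N, Suc N}. (x n)\<^sup>2) \<le> (\<Sum>n. (x n)\<^sup>2)"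
      using x by (intro sum_le_suminf) (auto simp: l2_def)
    then show "l2_norm (Tsw N x) \<le> 1 * l2_norm x"
      unfolding l2_norm_def sq_Tsw by simp
  qed
  have z: "Tsw N (l2_basis i) = (\<lambda>n. 0)" if "i \<notin> {N, Suc N}" for i
    using that by (auto simp: fun_eq_iff Tsw_def l2_basis_def)
  show "summable (\<lambda>i. (l2_norm (Tsw N (l2_basis i)))\<^sup>2)"
    by (rule summable_finite[of "{N, Suc N}"]) (auto simp: z l2_norm_def)
next
  fix x :: "nat \<Rightarrow> real"
  show "Tsw N x \<in> l2" by (rule Tsw_l2)
qed (auto simp: Tsw_def)

lemma Tsw_sa: "self_adjoint_l2 (Tsw N)"
  unfolding self_adjoint_l2_def
  by (simp add: inner_Tsw inner_Tsw2 algebra_simps)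

lemma norm_tp_sq: "p \<noteq> q \<Longrightarrow> (l2_norm (tp c p q))\<^sup>2 = 2 * c\<^sup>2"
proof -
  assume pq: "p \<noteq> q"
  have "(\<Sum>n. (tp c p q n)\<^sup>2) = (\<Sum>n\<in>{p,q}. (tp c p q n)\<^sup>2)"
    by (rule suminf_finite) (auto simp: tp_def)
  also have "\<dots> = 2 * c\<^sup>2" using pq by (simp add: tp_def)
  finally show ?thesis by (simp only: norm_sq[OF tp_l2])
qed

theorem mainTheorem15:
  fixes a :: "nat \<Rightarrow> real" and eps :: real
  assumes "\<And>i. a i \<noteq> 0"
    and "summable (\<lambda>i. (a i)\<^sup>2)"
    and "0 < eps"
  shows "\<exists>Y :: nat + nat \<times> nat \<Rightarrow> (nat \<Rightarrow> real).
           frame_l2 Y \<and> frame_dist_less (frameX a) Y eps \<and> \<not> injective_family Y"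
proof -
  have "eps / (2 * \<bar>a 0\<bar> + 1) > 0" using assms(3) by (simp add: add_nonneg_pos)
  then obtain N where N: "(1/2::real)^N < eps / (2 * \<bar>a 0\<bar> + 1)"
    using real_arch_pow_inv[of _ "1/2"] by auto
  define j0 where "j0 = (Inr (N, 0) :: nat + nat \<times> nat)"
  define Y where "Y = (frameX a)(j0 := (\<lambda>n. 0))"
  have fr: "frame_l2 Y"
    by (rule frame_Y[OF assms(2)]) (auto simp: Y_def j0_def X_Inl)
  define c where "c = (1/2::real)^N * a 0"
  define D where "D = (\<lambda>k. (l2_norm (\<lambda>n. frameX a k n - Y k n))\<^sup>2)"
  have D0: "D k = 0" if "k \<noteq> j0" for k
    using that by (simp add: D_def Y_def l2_norm_def)
  have Dj: "D j0 = 2 * c\<^sup>2"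
    by (simp add: D_def Y_def j0_def X_Inr c_def norm_tp_sq)
  have sD: "D summable_on UNIV"
    using summable_on_cong_neutral[of "{j0}" UNIV D D] D0 by auto
  have iD: "infsum D UNIV = 2 * c\<^sup>2"
    using infsum_cong_neutral[of "{j0}" UNIV D D] D0 Dj by auto
  have "sqrt (2 * c\<^sup>2) \<le> sqrt (4 * c\<^sup>2)" by simp
  also have "sqrt (4 * c\<^sup>2) = 2 * \<bar>c\<bar>"
    by (simp add: real_sqrt_mult)
  also have "2 * \<bar>c\<bar> = (2 * \<bar>a 0\<bar>) * (1/2)^N" by (simp add: c_def abs_mult)
  also have "\<dots> \<le> (2 * \<bar>a 0\<bar> + 1) * (1/2)^N" by simp
  also have "\<dots> < eps"
  proof -
    have K: "0 < 2 * \<bar>a 0\<bar> + 1" by simp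
    have "(1/2::real)^N * (2 * \<bar>a 0\<bar> + 1) < eps" using N pos_less_divide_eq[OF K] by blast
    then show ?thesis by (simp only: mult.commute)
  qed
  finally have dl: "frame_dist_less (frameX a) Y eps"
    unfolding frame_dist_less_def using sD iD by (simp add: D_def)
  have zero: "l2_inner (Tsw N (Y k)) (Y k) = 0" for k
  proof (cases k)
    case (Inl i) then show ?thesis
      by (simp add: inner_Tsw Y_def j0_def X_Inl l2_basis_def)
  next
    case (Inr p) then obtain i m where p: "k = Inr (i,m)" by (cases p) auto
    show ?thesis
    proof (cases "k = j0")
      case True then show ?thesis by (simp add: inner_Tsw Y_def)
    next
      case False
      then have "(i,m) \<noteq> (N,0)" by (simp add: p j0_def)
      then have "tp ((1/2)^i * a m) i (Suc(i+m)) N * tp ((1/2)^i * a m) i (Suc(i+m)) (Suc N) = 0"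
        by (rule tp_prod)
      then show ?thesis using False
        by (simp add: inner_Tsw Y_def p X_Inr mult.commute)
    qed
  qed
  have ni: "\<not> injective_family Y"
    unfolding injective_family_def
  proof
    assume H: "\<forall>T. hilbert_schmidt_l2 T \<and> self_adjoint_l2 T \<and> (\<forall>k. l2_inner (T (Y k)) (Y k) = 0)
          \<longrightarrow> (\<forall>x\<in>l2. T x = (\<lambda>n. 0))"
    have P: "hilbert_schmidt_l2 (Tsw N) \<and> self_adjoint_l2 (Tsw N) \<and> (\<forall>k. l2_inner (Tsw N (Y k)) (Y k) = 0)"
      using Tsw_HS Tsw_sa zero by simp
    have "\<forall>x\<in>l2. Tsw N x = (\<lambda>n. 0)"
      using spec[OF H, of "Tsw N"] P by (rule mp)
    then have "Tsw N (l2_basis N) = (\<lambda>n. 0)"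
      using basis_l2 by (rule bspec)
    then have "Tsw N (l2_basis N) (Suc N) = 0" by simp
    then show False by (simp add: Tsw_def l2_basis_def)
  qed
  show ?thesis using fr dl ni by blast
qed

end
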